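(* Fix $I_{ij},I_{jk},I_{ki}\in[0,\infty)$. Let $\mathcal{U}_E^{ijk}$ be the set of $(u_i,u_j,u_k)\in\mathbb{R}^3$ such that $(e^{u_i},e^{u_j},e^{u_k})\in\mathcal{R}_E^{ijk}$. Then $\mathcal{U}_E^{ijk}$ is a connected and simply connected open subset of $\mathbb{R}^3$.
   Context: The set $\mathcal{R}_E^{ijk}$ consists of those $(r_i,r_j,r_k)\in\mathbb{R}^3_{>0}$ for which $$l_{ij}=\sqrt{r_i^2+r_j^2+2I_{ij}r_ir_j},\quad l_{jk}=\sqrt{r_j^2+r_k^2+2I_{jk}r_jr_k},\quad l_{ki}=\sqrt{r_k^2+r_i^2+2I_{ki}r_kr_i}$$ satisfy the strict triangle inequalities. *)

theory Defs
  imports "HOL-Analysis.Analysis"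
begin

definition edge_len :: "real \<Rightarrow> real \<Rightarrow> real \<Rightarrow> real" where
  "edge_len I ra rb = sqrt (ra\<^sup>2 + rb\<^sup>2 + 2 * I * ra * rb)"

definition R_E :: "real \<Rightarrow> real \<Rightarrow> real \<Rightarrow> (real \<times> real \<times> real) set" where
  "R_E Iij Ijk Iki = {(ri, rj, rk). ri > 0 \<and> rj > 0 \<and> rk > 0 \<and>
     (let lij = edge_len Iij ri rj; ljk = edge_len Ijk rj rk; lki = edge_len Iki rk ri
      in lij < ljk + lki \<and> ljk < lki + lij \<and> lki < lij + ljk)}"

definition U_E :: "real \<Rightarrow> real \<Rightarrow> real \<Rightarrow> (real \<times> real \<times> real) set" where
  "U_E Iij Ijk Iki = {(ui, uj, uk). (exp ui, exp uj, exp uk) \<in> R_E Iij Ijk Iki}"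

end

theory Submission
  imports Defs
begin


lemma sqrt_sum_le_iff:
  fixes B C X :: real
  assumes "B \<ge> 0" "C \<ge> 0" "X \<ge> 0"
  shows "sqrt B + sqrt C \<le> sqrt X \<longleftrightarrow> (B + C \<le> X \<and> 4 * B * C \<le> (X - B - C)^2)"
proof -
  have "sqrt B + sqrt C \<le> sqrt X \<longleftrightarrow> (sqrt B + sqrt C)^2 \<le> X"
    using assms by (metis add_nonneg_nonneg real_le_rsqrt real_sqrt_ge_zero real_sqrt_le_iff real_sqrt_unique sqrt_le_D)
  also have "(sqrt B + sqrt C)^2 = B + C + 2 * sqrt (B * C)"
    using assms by (simp add: power2_eq_square algebra_simps real_sqrt_mult)
  also have "B + C + 2 * sqrt (B * C) \<le> X \<longleftrightarrow> 2 * sqrt (B * C) \<le> X - B - C" by linarith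
  also have "\<dots> \<longleftrightarrow> (B + C \<le> X \<and> 4 * B * C \<le> (X - B - C)^2)"
  proof
    assume h: "2 * sqrt (B * C) \<le> X - B - C"
    have "0 \<le> sqrt (B * C)" using assms by simp
    hence "B + C \<le> X" using h by linarith
    moreover have "(2 * sqrt (B * C))^2 \<le> (X - B - C)^2"
      using h \<open>0 \<le> sqrt (B * C)\<close> by (intro power_mono) auto
    hence "4 * B * C \<le> (X - B - C)^2" using assms by (simp add: power_mult_distrib)
    ultimately show "B + C \<le> X \<and> 4 * B * C \<le> (X - B - C)^2" by simp
  next
    assume h: "B + C \<le> X \<and> 4 * B * C \<le> (X - B - C)^2"
    have "sqrt (4 * B * C) \<le> sqrt ((X - B - C)^2)" using h real_sqrt_le_mono by blast
    moreover have "sqrt (4 * B * C) = 2 * sqrt (B * C)" by (simp add: real_sqrt_mult)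
    moreover have "sqrt ((X - B - C)^2) = X - B - C" using h by simp
    ultimately show "2 * sqrt (B * C) \<le> X - B - C" by linarith
  qed
  finally show ?thesis .
qed

lemma poly_step:
  fixes k m0 B c q s1 s2 :: real
  assumes m0: "m0 > 0" and q: "q > 0" and c: "c \<ge> 0" and B: "B > 0"
    and s1: "s1 > 0" and s12: "s1 \<le> s2"
    and M1: "k * s1 - m0 \<ge> 0"
    and N1: "(k * s1 - m0)^2 \<ge> B * (s1^2 + 2 * c * q * s1 + q^2)"
  shows "k * s2 - m0 \<ge> 0 \<and> (k * s2 - m0)^2 \<ge> B * (s2^2 + 2 * c * q * s2 + q^2)"
proof -
  have ks1: "k * s1 > 0" using M1 m0 by linarith
  hence kpos: "k > 0" using s1 by (simp add: zero_less_mult_iff)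
  have M2: "k * s2 - m0 \<ge> k * s1 - m0" using kpos s12 by simp
  have "2 * c * q * s1 \<ge> 0" using c q s1 by simp
  hence Cgt: "s1^2 + 2 * c * q * s1 + q^2 > s1^2" using q by (smt (verit) zero_less_power)
  have nu: "k^2 > B"
  proof (rule ccontr)
    assume "\<not> k^2 > B"
    hence kB: "k^2 \<le> B" by simp
    have "k * s1 - m0 < k * s1" using m0 by simp
    hence "(k * s1 - m0)^2 < (k * s1)^2" using M1 by (intro power_strict_mono) auto
    also have "\<dots> = k^2 * s1^2" by (simp add: power_mult_distrib)
    also have "\<dots> \<le> B * s1^2" using kB by (intro mult_right_mono) auto
    also have "\<dots> < B * (s1^2 + 2 * c * q * s1 + q^2)" using Cgt B by simp
    finally show False using N1 by simp
  qed
  define N where "N s = (k * s - m0)^2 - B * (s^2 + 2 * c * q * s + q^2)" for s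
  define sM where "sM = m0 / k"
  have ksM: "k * sM = m0" using kpos by (simp add: sM_def)
  have sMpos: "sM > 0" using m0 kpos by (simp add: sM_def)
  have NsM: "N sM < 0" unfolding N_def using ksM B sMpos q c
    by (simp add: add_pos_nonneg)
  have diff: "N x - N y = (x - y) * ((k^2 - B) * (x + y) - 2 * k * m0 - 2 * B * c * q)" for x y
    unfolding N_def by (simp add: power2_eq_square algebra_simps)
  have N1': "N s1 \<ge> 0" using N1 by (simp add: N_def)
  have sMs1: "sM \<le> s1" using ksM M1 kpos by (metis diff_ge_0_iff_ge mult_le_cancel_left_pos)
  have "N s1 - N sM > 0" using N1' NsM by linarith
  hence pos1: "(k^2 - B) * (s1 + sM) - 2 * k * m0 - 2 * B * c * q > 0"
    using diff[of s1 sM] sMs1 by (smt (verit) mult_nonneg_nonpos)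
  have "(k^2 - B) * (s2 + s1) \<ge> (k^2 - B) * (s1 + sM)"
    using nu s12 sMs1 by (intro mult_left_mono) auto
  hence "N s2 - N s1 \<ge> 0" using diff[of s2 s1] pos1 s12 by simp
  hence "N s2 \<ge> 0" using N1' by linarith
  thus ?thesis using M2 M1 by (simp add: N_def)
qed

lemma edge_len_sym: "edge_len I x y = edge_len I y x"
  unfolding edge_len_def by (simp add: algebra_simps)

lemma fail_mono:
  fixes a b c p q s1 s2 :: real
  assumes abc: "a \<ge> 0" "b \<ge> 0" "c \<ge> 0" and pq: "p > 0" "q > 0"
    and s: "0 < s1" "s1 \<le> s2"
    and f: "edge_len a s1 p \<ge> edge_len b p q + edge_len c q s1"
  shows "edge_len a s2 p \<ge> edge_len b p q + edge_len c q s2"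
proof -
  define B where "B = p^2 + q^2 + 2 * b * p * q"
  define X where "X s = s^2 + p^2 + 2 * a * s * p" for s
  define C where "C s = q^2 + s^2 + 2 * c * q * s" for s
  have Bpos: "B > 0" unfolding B_def using abc pq by (simp add: add_pos_pos add_pos_nonneg)
  have Xnn: "X s \<ge> 0" if "s \<ge> 0" for s unfolding X_def using abc pq that by simp
  have Cnn: "C s \<ge> 0" if "s \<ge> 0" for s unfolding C_def using abc pq that by simp
  have el: "edge_len a s p = sqrt (X s)" "edge_len c q s = sqrt (C s)" "edge_len b p q = sqrt B" for s
    unfolding edge_len_def X_def C_def B_def by (simp_all add: algebra_simps)
  have XBC: "X s - B - C s = 2 * ((a * p - c * q) * s - (q^2 + b * p * q))" for s
    unfolding X_def B_def C_def by (simp add: algebra_simps power2_eq_square)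
  have Cs: "C s = s^2 + 2 * c * q * s + q^2" for s unfolding C_def by simp
  have key: "edge_len b p q + edge_len c q s \<le> edge_len a s p \<longleftrightarrow>
     ((a * p - c * q) * s - (q^2 + b * p * q) \<ge> 0 \<and>
      ((a * p - c * q) * s - (q^2 + b * p * q))^2 \<ge> B * (s^2 + 2 * c * q * s + q^2))" if "s \<ge> 0" for s
  proof -
    have "edge_len b p q + edge_len c q s \<le> edge_len a s p \<longleftrightarrow> (B + C s \<le> X s \<and> 4 * B * C s \<le> (X s - B - C s)^2)"
      unfolding el using sqrt_sum_le_iff[of B "C s" "X s"] Bpos Cnn Xnn that by simp
    also have "\<dots> \<longleftrightarrow> ((a * p - c * q) * s - (q^2 + b * p * q) \<ge> 0 \<and>
      ((a * p - c * q) * s - (q^2 + b * p * q))^2 \<ge> B * (s^2 + 2 * c * q * s + q^2))"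
    proof -
      define M where "M = (a * p - c * q) * s - (q^2 + b * p * q)"
      have XM: "X s - B - C s = 2 * M" using XBC[of s] unfolding M_def by simp
      have e1: "B + C s \<le> X s \<longleftrightarrow> M \<ge> 0" using XM by linarith
      have e2: "(X s - B - C s)^2 = 4 * M^2" using XM by (simp add: power_mult_distrib)
      show ?thesis unfolding e1 e2 M_def[symmetric] Cs[symmetric] by linarith
    qed
    finally show ?thesis .
  qed
  have m0: "q^2 + b * p * q > 0" using abc pq by (simp add: add_pos_nonneg)
  show ?thesis
    using key[of s1] key[of s2] f s poly_step[OF m0 pq(2) abc(3) Bpos s, of "a * p - c * q"] by simp
qed


lemma mem_R_E: "(ri, rj, rk) \<in> R_E a b c \<longleftrightarrow> ri > 0 \<and> rj > 0 \<and> rk > 0 \<and>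
   edge_len a ri rj < edge_len b rj rk + edge_len c rk ri \<and>
   edge_len b rj rk < edge_len c rk ri + edge_len a ri rj \<and>
   edge_len c rk ri < edge_len a ri rj + edge_len b rj rk"
  by (simp add: R_E_def Let_def)

lemma edge_len_mono:
  assumes "I \<ge> 0" "y \<ge> 0" "0 \<le> x" "x \<le> x'"
  shows "edge_len I x y \<le> edge_len I x' y"
  unfolding edge_len_def
proof (rule real_sqrt_le_mono)
  have "x^2 \<le> x'^2" using assms by (intro power_mono) auto
  moreover have "2 * I * x * y \<le> 2 * I * x' * y" using assms by (intro mult_right_mono mult_left_mono) auto
  ultimately show "x\<^sup>2 + y\<^sup>2 + 2 * I * x * y \<le> x'\<^sup>2 + y\<^sup>2 + 2 * I * x' * y" by simp
qed

lemma fiber_conv: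
  assumes abc: "a \<ge> 0" "b \<ge> 0" "c \<ge> 0"
    and m1: "(s1, rj, rk) \<in> R_E a b c" and m2: "(s2, rj, rk) \<in> R_E a b c"
    and s: "s1 \<le> s" "s \<le> s2"
  shows "(s, rj, rk) \<in> R_E a b c"
proof -
  have pos: "s1 > 0" "rj > 0" "rk > 0" using m1 by (auto simp: mem_R_E)
  have spos: "s > 0" using pos s by simp
  have C2: "edge_len b rj rk < edge_len c rk s + edge_len a s rj"
  proof -
    have "edge_len c rk s1 \<le> edge_len c rk s"
      using edge_len_mono[of c rk s1 s] abc pos s by (simp add: edge_len_sym)
    moreover have "edge_len a s1 rj \<le> edge_len a s rj"
      using edge_len_mono[of a rj s1 s] abc pos s by simp
    ultimately show ?thesis using m1 by (simp add: mem_R_E)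
  qed
  have C1: "edge_len a s rj < edge_len b rj rk + edge_len c rk s"
  proof (rule ccontr)
    assume "\<not> ?thesis"
    hence "edge_len a s rj \<ge> edge_len b rj rk + edge_len c rk s" by simp
    hence "edge_len a s2 rj \<ge> edge_len b rj rk + edge_len c rk s2"
      using fail_mono[of a b c rj rk s s2] abc pos spos s by simp
    thus False using m2 by (simp add: mem_R_E)
  qed
  have C3: "edge_len c rk s < edge_len a s rj + edge_len b rj rk"
  proof (rule ccontr)
    assume "\<not> ?thesis"
    hence "edge_len c s rk \<ge> edge_len b rk rj + edge_len a rj s"
      by (simp add: edge_len_sym add.commute)
    hence "edge_len c s2 rk \<ge> edge_len b rk rj + edge_len a rj s2"
      using fail_mono[of c b a rk rj s s2] abc pos spos s by simp
    hence "edge_len c rk s2 \<ge> edge_len a s2 rj + edge_len b rj rk"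
      by (simp add: edge_len_sym add.commute)
    thus False using m2 by (simp add: mem_R_E)
  qed
  show ?thesis using C1 C2 C3 spos pos by (simp add: mem_R_E)
qed

definition hsel :: "real \<Rightarrow> real \<Rightarrow> real \<Rightarrow> real \<Rightarrow> real \<Rightarrow> real" where
  "hsel a b c rj rk = (sqrt ((a * rj + c * rk)^2 + 4 * b * rj * rk) - (a * rj + c * rk)) / 2"

lemma hsel_pos:
  assumes "a \<ge> 0" "b > 0" "c \<ge> 0" "rj > 0" "rk > 0"
  shows "hsel a b c rj rk > 0"
proof -
  have "(a * rj + c * rk)^2 < (a * rj + c * rk)^2 + 4 * b * rj * rk" using assms by simp
  hence "sqrt ((a * rj + c * rk)^2) < sqrt ((a * rj + c * rk)^2 + 4 * b * rj * rk)"
    by (rule real_sqrt_less_mono)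
  moreover have "sqrt ((a * rj + c * rk)^2) = a * rj + c * rk" using assms by simp
  ultimately show ?thesis unfolding hsel_def by simp
qed

lemma hsel_eq:
  assumes "a \<ge> 0" "b > 0" "c \<ge> 0" "rj > 0" "rk > 0"
  shows "(hsel a b c rj rk)^2 + hsel a b c rj rk * (a * rj + c * rk) = b * rj * rk"
proof -
  define X where "X = a * rj + c * rk"
  define S where "S = sqrt (X^2 + 4 * b * rj * rk)"
  have S2: "S^2 = X^2 + 4 * b * rj * rk" unfolding S_def using assms by simp
  have "hsel a b c rj rk = (S - X) / 2" unfolding hsel_def S_def X_def by simp
  hence SX: "S = X + 2 * hsel a b c rj rk" by simp
  have "S^2 - X^2 = 4 * ((hsel a b c rj rk)^2 + hsel a b c rj rk * X)"
    unfolding SX by (simp add: power2_eq_square algebra_simps)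
  thus ?thesis unfolding S2 X_def by simp
qed

lemma right_tri:
  fixes X Y Z :: real
  assumes "X > 0" "Y > 0" "Z = X + Y"
  shows "sqrt X < sqrt Z + sqrt Y \<and> sqrt Z < sqrt X + sqrt Y \<and> sqrt Y < sqrt X + sqrt Z"
proof -
  have a: "sqrt X < sqrt Z" "sqrt Y < sqrt Z" using assms by simp_all
  have "(sqrt X + sqrt Y)^2 = X + Y + 2 * sqrt X * sqrt Y" using assms by (simp add: power2_eq_square algebra_simps)
  also have "\<dots> > Z" using assms by simp
  finally have "sqrt Z < sqrt ((sqrt X + sqrt Y)^2)" by (rule real_sqrt_less_mono)
  hence "sqrt Z < sqrt X + sqrt Y" using assms by simp
  moreover have "sqrt X \<ge> 0" "sqrt Y \<ge> 0" using assms by simp_all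
  ultimately show ?thesis using a by linarith
qed

lemma hsel_in:
  assumes "a \<ge> 0" "b > 0" "c \<ge> 0" "rj > 0" "rk > 0"
  shows "(hsel a b c rj rk, rj, rk) \<in> R_E a b c"
proof -
  define h where "h = hsel a b c rj rk"
  have hp: "h > 0" using hsel_pos[OF assms] by (simp add: h_def)
  have he: "h^2 + h * (a * rj + c * rk) = b * rj * rk" using hsel_eq[OF assms] by (simp add: h_def)
  define X where "X = h^2 + rj^2 + 2 * a * h * rj"
  define Y where "Y = rk^2 + h^2 + 2 * c * rk * h"
  define Z where "Z = rj^2 + rk^2 + 2 * b * rj * rk"
  have XP: "X > 0" unfolding X_def using hp assms by (simp add: add_pos_nonneg)
  have YP: "Y > 0" unfolding Y_def using hp assms by (simp add: add_pos_nonneg)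
  have ZXY: "Z = X + Y" unfolding X_def Y_def Z_def using he by (simp add: algebra_simps power2_eq_square)
  have el: "edge_len a h rj = sqrt X" "edge_len b rj rk = sqrt Z" "edge_len c rk h = sqrt Y"
    unfolding edge_len_def X_def Y_def Z_def by simp_all
  show ?thesis using right_tri[OF XP YP ZXY] hp assms unfolding h_def[symmetric]
    by (simp add: mem_R_E el)
qed



lemma convex_between:
  fixes u x y :: real
  assumes "0 \<le> u" "u \<le> 1"
  shows "min x y \<le> (1 - u) * x + u * y \<and> (1 - u) * x + u * y \<le> max x y"
proof -
  have e: "(1 - u) * x + u * y = x + u * (y - x)" by (simp add: algebra_simps)
  have f: "(1 - u) * x + u * y = y + (1 - u) * (x - y)" by (simp add: algebra_simps)
  show ?thesis
  proof (cases "x \<le> y")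
    case True
    have A: "0 \<le> u * (y - x)" using assms True by simp
    have B: "0 \<le> (1 - u) * (y - x)" using assms True by simp
    have C: "(1 - u) * x + u * y \<ge> x" using A e by linarith
    have D: "(1 - u) * x + u * y \<le> y" using B f by (simp add: algebra_simps)
    show ?thesis using C D True by (simp add: min_def max_def)
  next
    case False
    have A: "0 \<le> u * (x - y)" using assms False by simp
    have B: "0 \<le> (1 - u) * (x - y)" using assms False by simp
    have C: "(1 - u) * x + u * y \<ge> y" using B f by linarith
    have D: "(1 - u) * x + u * y \<le> x" using A e by (simp add: algebra_simps)
    show ?thesis using C D False by (simp add: min_def max_def)
  qed
qed

lemma contractible_R_E_mid:
  assumes a: "a \<ge> 0" and b: "b > 0" and c: "c \<ge> 0"
  shows "contractible (R_E a b c)"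
proof -
  define R where "R = R_E a b c"
  define O2 where "O2 = {0::real<..} \<times> {0::real<..}"
  define \<psi> where "\<psi> = (\<lambda>y::real\<times>real. (hsel a b c (fst y) (snd y), fst y, snd y))"
  have cont_psi: "continuous_on O2 \<psi>" unfolding \<psi>_def hsel_def
    by (intro continuous_intros) auto
  have psi_in: "\<psi> y \<in> R" if "y \<in> O2" for y
    using that hsel_in[OF a b c] unfolding \<psi>_def R_def O2_def by (cases y) auto
  have snd_in: "snd x \<in> O2" if "x \<in> R" for x
    using that unfolding R_def O2_def by (cases x) (auto simp: mem_R_E)
  have h1: "homotopic_with_canon (\<lambda>f. True) R R id (\<psi> \<circ> snd)"
  proof (rule homotopic_with_linear)
    show "continuous_on R id" by (simp add: continuous_on_id id_def)
    show "continuous_on R (\<psi> \<circ> snd)"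
      by (rule continuous_on_compose[OF continuous_on_snd[OF continuous_on_id] continuous_on_subset[OF cont_psi]])
         (use snd_in in auto)
    fix x assume xR: "x \<in> R"
    obtain ri rj rk where x: "x = (ri, rj, rk)" by (cases x) auto
    have m1: "(ri, rj, rk) \<in> R_E a b c" using xR x R_def by simp
    have pos: "rj > 0" "rk > 0" using m1 by (auto simp: mem_R_E)
    have m2: "(hsel a b c rj rk, rj, rk) \<in> R_E a b c" using hsel_in[OF a b c pos] .
    show "closed_segment (id x) ((\<psi> \<circ> snd) x) \<subseteq> R"
    proof
      fix w assume "w \<in> closed_segment (id x) ((\<psi> \<circ> snd) x)"
      then obtain u where u: "0 \<le> u" "u \<le> 1"
        and w: "w = (1 - u) *\<^sub>R x + u *\<^sub>R (hsel a b c rj rk, rj, rk)"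
        unfolding closed_segment_def \<psi>_def x by auto
      define h where "h = hsel a b c rj rk"
      have w': "w = ((1 - u) * ri + u * h, rj, rk)" using w unfolding x h_def
        by (simp add: algebra_simps)
      have lo: "min ri h \<le> (1 - u) * ri + u * h" and hi: "(1 - u) * ri + u * h \<le> max ri h"
        using convex_between[OF u, of ri h] by auto
      have mi: "(min ri h, rj, rk) \<in> R_E a b c" using m1 m2 unfolding h_def by (simp add: min_def)
      have ma: "(max ri h, rj, rk) \<in> R_E a b c" using m1 m2 unfolding h_def by (simp add: max_def)
      show "w \<in> R" unfolding w' R_def using fiber_conv[OF a b[THEN less_imp_le] c mi ma lo hi] .
    qed
  qed
  have cO2: "convex O2" unfolding O2_def by (intro convex_Times convex_real_interval)
  have oneO2: "(1::real, 1::real) \<in> O2" unfolding O2_def by simp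
  have h2a: "homotopic_with_canon (\<lambda>f. True) R O2 snd (\<lambda>x. (1, 1))"
  proof (rule homotopic_with_linear)
    show "continuous_on R snd" by (intro continuous_intros)
    show "continuous_on R (\<lambda>x. (1::real, 1::real))" by (intro continuous_intros)
    fix x assume "x \<in> R"
    thus "closed_segment (snd x) (1, 1) \<subseteq> O2"
      using snd_in cO2 oneO2 by (simp add: closed_segment_subset)
  qed
  have h2: "homotopic_with_canon (\<lambda>f. True) R R (\<psi> \<circ> snd) (\<psi> \<circ> (\<lambda>x. (1, 1)))"
    by (rule homotopic_with_compose_continuous_left[OF _ cont_psi]) (use h2a psi_in in auto)
  have "homotopic_with_canon (\<lambda>f. True) R R id (\<lambda>x. \<psi> (1, 1))"
    using homotopic_with_trans[OF h1 h2] by (simp add: o_def)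
  thus ?thesis unfolding contractible_def R_def by blast
qed

lemma mem_rot: "(ri, rj, rk) \<in> R_E a b c \<longleftrightarrow> (rj, rk, ri) \<in> R_E b c a"
  by (auto simp: mem_R_E)

lemma R_E_rot: "R_E b c a homeomorphic R_E a b c"
proof (rule homeomorphicI[where f = "\<lambda>p. (snd (snd p), fst p, fst (snd p))"
                              and g = "\<lambda>p. (fst (snd p), snd (snd p), fst p)"])
  show "(\<lambda>p. (snd (snd p), fst p, fst (snd p))) ` R_E b c a = R_E a b c"
  proof (intro set_eqI iffI)
    fix x assume "x \<in> (\<lambda>p. (snd (snd p), fst p, fst (snd p))) ` R_E b c a"
    then obtain p where p: "p \<in> R_E b c a" "x = (snd (snd p), fst p, fst (snd p))" by auto
    obtain u v w where "p = (u, v, w)" by (cases p) auto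
    thus "x \<in> R_E a b c" using p mem_rot[of w u v a b c] by simp
  next
    fix x assume x: "x \<in> R_E a b c"
    obtain u v w where xe: "x = (u, v, w)" by (cases x) auto
    have "(v, w, u) \<in> R_E b c a" using x xe mem_rot[of u v w a b c] by simp
    moreover have "x = (\<lambda>p. (snd (snd p), fst p, fst (snd p))) (v, w, u)" using xe by simp
    ultimately show "x \<in> (\<lambda>p. (snd (snd p), fst p, fst (snd p))) ` R_E b c a" by blast
  qed
  show "(\<lambda>p. (fst (snd p), snd (snd p), fst p)) ` R_E a b c = R_E b c a"
  proof (intro set_eqI iffI)
    fix x assume "x \<in> (\<lambda>p. (fst (snd p), snd (snd p), fst p)) ` R_E a b c"
    then obtain p where p: "p \<in> R_E a b c" "x = (fst (snd p), snd (snd p), fst p)" by auto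
    obtain u v w where "p = (u, v, w)" by (cases p) auto
    thus "x \<in> R_E b c a" using p mem_rot[of u v w a b c] by simp
  next
    fix x assume x: "x \<in> R_E b c a"
    obtain u v w where xe: "x = (u, v, w)" by (cases x) auto
    have "(w, u, v) \<in> R_E a b c" using x xe mem_rot[of w u v a b c] by simp
    moreover have "x = (\<lambda>p. (fst (snd p), snd (snd p), fst p)) (w, u, v)" using xe by simp
    ultimately show "x \<in> (\<lambda>p. (fst (snd p), snd (snd p), fst p)) ` R_E a b c" by blast
  qed
qed (auto intro!: continuous_intros)

lemma tri0:
  fixes x y z :: real
  assumes "x > 0" "y > 0" "z > 0"
  shows "sqrt (x^2 + y^2) < sqrt (y^2 + z^2) + sqrt (z^2 + x^2)"
proof -
  have "sqrt (x^2 + y^2) \<le> sqrt ((x + y)^2)"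
    using assms by (intro real_sqrt_le_mono) (simp add: power2_eq_square algebra_simps)
  also have "\<dots> = x + y" using assms by simp
  also have "y < sqrt (y^2 + z^2)"
    using assms real_sqrt_less_mono[of "y^2" "y^2 + z^2"] by simp
  hence "x + y < sqrt (y^2 + z^2) + x" by simp
  also have "x < sqrt (z^2 + x^2)"
    using assms real_sqrt_less_mono[of "x^2" "z^2 + x^2"] by simp
  hence "sqrt (y^2 + z^2) + x < sqrt (y^2 + z^2) + sqrt (z^2 + x^2)" by simp
  finally show ?thesis .
qed

lemma R_E_000: "R_E 0 0 0 = {0<..} \<times> {0<..} \<times> {0<..}"
proof (intro set_eqI iffI)
  fix x assume "x \<in> R_E 0 0 0" thus "x \<in> {0<..} \<times> {0<..} \<times> {0<..}"
    by (cases x) (auto simp: mem_R_E)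
next
  fix x :: "real \<times> real \<times> real" assume x: "x \<in> {0<..} \<times> {0<..} \<times> {0<..}"
  obtain u v w where xe: "x = (u, v, w)" by (cases x) auto
  have p: "u > 0" "v > 0" "w > 0" using x xe by auto
  show "x \<in> R_E 0 0 0" unfolding xe mem_R_E edge_len_def
    using p tri0[of u v w] tri0[of v w u] tri0[of w u v] by simp
qed

lemma contractible_R_E:
  assumes "a \<ge> 0" "b \<ge> 0" "c \<ge> 0"
  shows "contractible (R_E a b c)"
proof -
  consider "b > 0" | "c > 0" | "a > 0" | "a = 0 \<and> b = 0 \<and> c = 0" using assms by linarith
  thus ?thesis
  proof cases
    case 1 thus ?thesis using contractible_R_E_mid assms by simp
  next
    case 2
    hence "contractible (R_E b c a)" using contractible_R_E_mid assms by simp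
    thus ?thesis using homeomorphic_contractible_eq[OF R_E_rot] by blast
  next
    case 3
    hence "contractible (R_E c a b)" using contractible_R_E_mid assms by simp
    moreover have "R_E c a b homeomorphic R_E a b c"
      using homeomorphic_trans[OF R_E_rot[of c a b] R_E_rot[of b c a]] .
    ultimately show ?thesis using homeomorphic_contractible_eq by blast
  next
    case 4
    hence "R_E a b c = {0<..} \<times> {0<..} \<times> {0<..}" using R_E_000 by simp
    thus ?thesis
      by (auto intro!: convex_imp_contractible convex_Times convex_real_interval)
  qed
qed

lemma U_E_homeo: "U_E a b c homeomorphic R_E a b c"
proof (rule homeomorphicI[where f = "\<lambda>p. (exp (fst p), exp (fst (snd p)), exp (snd (snd p)))"
                              and g = "\<lambda>p. (ln (fst p), ln (fst (snd p)), ln (snd (snd p)))"])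
  show "(\<lambda>p. (exp (fst p), exp (fst (snd p)), exp (snd (snd p)))) ` U_E a b c = R_E a b c"
  proof (intro set_eqI iffI)
    fix x assume "x \<in> (\<lambda>p. (exp (fst p), exp (fst (snd p)), exp (snd (snd p)))) ` U_E a b c"
    thus "x \<in> R_E a b c" by (auto simp: U_E_def)
  next
    fix x assume x: "x \<in> R_E a b c"
    obtain u v w where xe: "x = (u, v, w)" by (cases x) auto
    have p: "u > 0" "v > 0" "w > 0" using x xe by (auto simp: mem_R_E)
    have "(ln u, ln v, ln w) \<in> U_E a b c" using x xe p by (simp add: U_E_def)
    moreover have "x = (\<lambda>p. (exp (fst p), exp (fst (snd p)), exp (snd (snd p)))) (ln u, ln v, ln w)"
      using xe p by simp
    ultimately show "x \<in> (\<lambda>p. (exp (fst p), exp (fst (snd p)), exp (snd (snd p)))) ` U_E a b c" by blast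
  qed
  show "(\<lambda>p. (ln (fst p), ln (fst (snd p)), ln (snd (snd p)))) ` R_E a b c = U_E a b c"
  proof (intro set_eqI iffI)
    fix x assume "x \<in> (\<lambda>p. (ln (fst p), ln (fst (snd p)), ln (snd (snd p)))) ` R_E a b c"
    then obtain p where p: "p \<in> R_E a b c" "x = (ln (fst p), ln (fst (snd p)), ln (snd (snd p)))" by auto
    obtain u v w where pe: "p = (u, v, w)" by (cases p) auto
    have q: "u > 0" "v > 0" "w > 0" using p pe by (auto simp: mem_R_E)
    show "x \<in> U_E a b c" using p pe q by (simp add: U_E_def)
  next
    fix x assume x: "x \<in> U_E a b c"
    obtain u v w where xe: "x = (u, v, w)" by (cases x) auto
    have "(exp u, exp v, exp w) \<in> R_E a b c" using x xe by (simp add: U_E_def)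
    moreover have "x = (\<lambda>p. (ln (fst p), ln (fst (snd p)), ln (snd (snd p)))) (exp u, exp v, exp w)"
      using xe by simp
    ultimately show "x \<in> (\<lambda>p. (ln (fst p), ln (fst (snd p)), ln (snd (snd p)))) ` R_E a b c" by blast
  qed
  show "continuous_on (U_E a b c) (\<lambda>p. (exp (fst p), exp (fst (snd p)), exp (snd (snd p))))"
    by (intro continuous_intros)
  show "continuous_on (R_E a b c) (\<lambda>p. (ln (fst p), ln (fst (snd p)), ln (snd (snd p))))"
    by (intro continuous_intros) (auto simp: mem_R_E)
qed (auto simp: U_E_def mem_R_E)

lemma open_U_E: "open (U_E a b c)"
proof -
  define E where "E I x y = sqrt (x^2 + y^2 + 2 * I * x * y)" for I x y :: real
  define f1 where "f1 = (\<lambda>p::real\<times>real\<times>real. E a (exp (fst p)) (exp (fst (snd p))))"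
  define f2 where "f2 = (\<lambda>p::real\<times>real\<times>real. E b (exp (fst (snd p))) (exp (snd (snd p))))"
  define f3 where "f3 = (\<lambda>p::real\<times>real\<times>real. E c (exp (snd (snd p))) (exp (fst p)))"
  have eq: "U_E a b c = {p. f1 p < f2 p + f3 p} \<inter> {p. f2 p < f3 p + f1 p} \<inter> {p. f3 p < f1 p + f2 p}"
    by (auto simp: U_E_def mem_R_E f1_def f2_def f3_def E_def edge_len_def)
  have c1: "continuous_on UNIV f1" "continuous_on UNIV f2" "continuous_on UNIV f3"
    unfolding f1_def f2_def f3_def E_def by (intro continuous_intros)+
  show ?thesis unfolding eq
    by (intro open_Int open_Collect_less continuous_on_add c1)
qed

theorem corollary2p2:
  fixes Iij Ijk Iki :: real
  assumes "Iij \<ge> 0" and "Ijk \<ge> 0" and "Iki \<ge> 0"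
  shows "open (U_E Iij Ijk Iki) \<and> connected (U_E Iij Ijk Iki) \<and> simply_connected (U_E Iij Ijk Iki)"
proof -
  have "contractible (U_E Iij Ijk Iki)"
    using homeomorphic_contractible_eq[OF U_E_homeo] contractible_R_E[OF assms] by blast
  thus ?thesis using open_U_E contractible_imp_connected contractible_imp_simply_connected by blast
qed

end
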